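(* Let $\mathsf{X}\in\{\mathsf{F},\mathsf{V}\}$. If $K\subseteq\Sigma^*$ is $\leftarrow$-reducible to $L\subseteq\Gamma^*$ via a Mealy machine with $d$ states, then $X_K(n) \le 2d\cdot X_L(n)$ for all $n$. In particular, for any function $s(n)$ the classes $\mathsf{F}(\mathcal{O}(s))$ and $\mathsf{V}(\mathcal{O}(s))$ are closed under $\leftarrow$-reductions.
   Context: A Mealy machine $(Q,\Sigma,\Gamma,q_0,\delta)$ with finite $Q$ and $\delta\colon Q\times\Sigma\to Q\times\Gamma$ defines $\tau_q$ by $\tau_q(\varepsilon)=\varepsilon$, $\tau_p(bu)=c\,\tau_q(u)$ if $\delta(p,b)=(q,c)$; it computes the $\leftarrow$-transduction $x\mapsto\tau_{q_0}(x^\mathsf{R})^\mathsf{R}$ ($^\mathsf{R}$ = word reversal). This is a $\leftarrow$-reduction from $K$ to $L$ if $x\in K\iff\tau(x)\in L$ for all $x\in\Sigma^*$. A streaming algorithm is a deterministic (possibly infinite-state) automaton with an injective encoding $\mathrm{enc}$ of states into bit strings. Fixed-size: fix a padding symbol in the alphabet; $\mathrm{last}_n(w)$ is the last $n$ symbols of $w$, left-padded with the padding symbol if $|w|<n$; a fixed-size algorithm for $L$ is $(\mathcal{A}_n)$ with $\mathcal{A}_n$ accepting $\{w:\mathrm{last}_n(w)\in L\}$, with space at $n$ the maximal encoding length of a state of $\mathcal{A}_n$; $F_L(n)$ is the minimum over all such algorithms. Variable-size: over alphabet $\cup\{\downarrow\}$, $\mathrm{wnd}(\varepsilon)=\varepsilon$,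 $\mathrm{wnd}(ub)=\mathrm{wnd}(u)b$, $\mathrm{wnd}(u\!\downarrow)=\varepsilon$ if $\mathrm{wnd}(u)=\varepsilon$, $\mathrm{wnd}(u\!\downarrow)=v$ if $\mathrm{wnd}(u)=bv$; an algorithm accepts $\{w:\mathrm{wnd}(w)\in L\}$ with space $v_\mathcal{A}(n)=\max\{|\mathrm{enc}(\mathcal{A}(u'))|:u'\text{ prefix of }u,\ |\mathrm{wnd}(v)|\le n\text{ for all prefixes }v\text{ of }u\}$; $V_L(n)$ is the minimum over all such algorithms. $\mathsf{X}(\mathcal{O}(s))$ is the class of languages with an $\mathsf{X}$-model algorithm of space $\mathcal{O}(s(n))$. *)

theory Defs
  imports Complex_Main "HOL-Library.Extended_Nat" "HOL-Library.Sublist"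
begin

text \<open>A streaming algorithm: a deterministic (possibly infinite-state) automaton with
state set Q (a subset of nat; since the encoding is injective into bit strings, every
state set is countable, so this is no loss of generality), initial state, transition
function, set of accepting states, and an encoding of states into bit strings that is
injective on Q.\<close>

record 'a stream_alg =
  st_states :: "nat set"
  st_init :: nat
  st_trans :: "nat \<Rightarrow> 'a \<Rightarrow> nat"
  st_acc :: "nat set"
  st_enc :: "nat \<Rightarrow> bool list"

definition wf_alg :: "'a stream_alg \<Rightarrow> bool" where
  "wf_alg A \<longleftrightarrow> st_init A \<in> st_states A
     \<and> (\<forall>q\<in>st_states A. \<forall>a. st_trans A q a \<in> st_states A)
     \<and> st_acc A \<subseteq> st_states A
     \<and> inj_on (st_enc A) (st_states A)"

definition run_alg :: "'a stream_alg \<Rightarrow> 'a list \<Rightarrow> nat" where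
  "run_alg A w = foldl (st_trans A) (st_init A) w"

definition accepts_alg :: "'a stream_alg \<Rightarrow> 'a list \<Rightarrow> bool" where
  "accepts_alg A w \<longleftrightarrow> run_alg A w \<in> st_acc A"

definition last_n :: "'a \<Rightarrow> nat \<Rightarrow> 'a list \<Rightarrow> 'a list" where
  "last_n pad n w = (if length w < n then replicate (n - length w) pad @ w
                     else drop (length w - n) w)"

definition alg_space :: "'a stream_alg \<Rightarrow> enat" where
  "alg_space A = (SUP q\<in>st_states A. enat (length (st_enc A q)))"

definition is_fixed_alg :: "'a \<Rightarrow> 'a list set \<Rightarrow> nat \<Rightarrow> 'a stream_alg \<Rightarrow> bool" where
  "is_fixed_alg pad L n A \<longleftrightarrow> wf_alg A \<and> (\<forall>w. accepts_alg A w \<longleftrightarrow> last_n pad n w \<in> L)"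

definition F_space :: "'a \<Rightarrow> 'a list set \<Rightarrow> nat \<Rightarrow> enat" where
  "F_space pad L n = (INF A\<in>{A. is_fixed_alg pad L n A}. alg_space A)"

text \<open>The extended alphabet is 'a option; None plays the role of the pop symbol.\<close>

fun wnd_step :: "'a list \<Rightarrow> 'a option \<Rightarrow> 'a list" where
  "wnd_step v (Some b) = v @ [b]"
| "wnd_step v None = tl v"

definition wnd :: "'a option list \<Rightarrow> 'a list" where
  "wnd w = foldl wnd_step [] w"

definition is_var_alg :: "'a list set \<Rightarrow> 'a option stream_alg \<Rightarrow> bool" where
  "is_var_alg L A \<longleftrightarrow> wf_alg A \<and> (\<forall>w. accepts_alg A w \<longleftrightarrow> wnd w \<in> L)"

definition var_space :: "'a option stream_alg \<Rightarrow> nat \<Rightarrow> enat" where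
  "var_space A n = Sup {enat (length (st_enc A (run_alg A u'))) | u u'.
       prefix u' u \<and> (\<forall>v. prefix v u \<longrightarrow> length (wnd v) \<le> n)}"

definition V_space :: "'a list set \<Rightarrow> nat \<Rightarrow> enat" where
  "V_space L n = (INF A\<in>{A. is_var_alg L A}. var_space A n)"

definition bigO_enat :: "(nat \<Rightarrow> enat) \<Rightarrow> (nat \<Rightarrow> real) \<Rightarrow> bool" where
  "bigO_enat f s \<longleftrightarrow> (\<exists>c N. \<forall>n\<ge>N. \<exists>k. f n = enat k \<and> real k \<le> c * s n)"

definition F_class :: "'a \<Rightarrow> (nat \<Rightarrow> real) \<Rightarrow> 'a list set set" where
  "F_class pad s = {L. \<exists>A :: nat \<Rightarrow> 'a stream_alg.
       (\<forall>n. is_fixed_alg pad L n (A n)) \<and> bigO_enat (\<lambda>n. alg_space (A n)) s}"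

definition V_class :: "(nat \<Rightarrow> real) \<Rightarrow> 'a list set set" where
  "V_class s = {L. \<exists>A. is_var_alg L A \<and> bigO_enat (var_space A) s}"

record ('q, 'a, 'b) mealy =
  m_states :: "'q set"
  m_init :: 'q
  m_delta :: "'q \<Rightarrow> 'a \<Rightarrow> 'q \<times> 'b"

definition wf_mealy :: "('q, 'a, 'b) mealy \<Rightarrow> bool" where
  "wf_mealy M \<longleftrightarrow> finite (m_states M) \<and> m_init M \<in> m_states M
     \<and> (\<forall>q\<in>m_states M. \<forall>a. fst (m_delta M q a) \<in> m_states M)"

fun mealy_tau :: "('q, 'a, 'b) mealy \<Rightarrow> 'q \<Rightarrow> 'a list \<Rightarrow> 'b list" where
  "mealy_tau M p [] = []"
| "mealy_tau M p (b # u) = snd (m_delta M p b) # mealy_tau M (fst (m_delta M p b)) u"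

definition left_transduction :: "('q, 'a, 'b) mealy \<Rightarrow> 'a list \<Rightarrow> 'b list" where
  "left_transduction M x = rev (mealy_tau M (m_init M) (rev x))"

definition is_left_reduction :: "('q, 'a, 'b) mealy \<Rightarrow> 'a list set \<Rightarrow> 'b list set \<Rightarrow> bool" where
  "is_left_reduction M K L \<longleftrightarrow> (\<forall>x. x \<in> K \<longleftrightarrow> left_transduction M x \<in> L)"

end

theory Submission
  imports Defs "HOL-Library.Countable"
begin


definition blk :: "nat \<Rightarrow> bool list \<Rightarrow> bool list" where
  "blk m w = w @ True # replicate (m - length w) False"

definition mx :: "bool list list \<Rightarrow> nat" where
  "mx ls = Max (set (map length ls))"

definition Enc :: "bool list list \<Rightarrow> bool list" where
  "Enc ls = (if \<forall>w\<in>set ls. w = [] then [] else concat (map (blk (mx ls)) ls))"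

lemma blk_inj_aux: "w1 @ True # replicate k1 False = w2 @ True # replicate k2 False \<Longrightarrow> w1 = w2"
proof (induction k1 arbitrary: k2 w1 w2 rule: nat_less_induct)
  case (1 k1)
  have "rev (w1 @ True # replicate k1 False) = rev (w2 @ True # replicate k2 False)"
    using 1(2) by simp
  hence e: "replicate k1 False @ True # rev w1 = replicate k2 False @ True # rev w2" by simp
  have "k1 = k2"
  proof (rule ccontr)
    assume "k1 \<noteq> k2"
    then consider "k1 < k2" | "k2 < k1" by linarith
    thus False
    proof cases
      case 1
      have "(replicate k1 False @ True # rev w1) ! k1 = True" by (simp add: nth_append)
      moreover have "(replicate k2 False @ True # rev w2) ! k1 = False" using 1 by (simp add: nth_append)
      ultimately show False using e by simp
    next
      case 2
      have "(replicate k2 False @ True # rev w2) ! k2 = True" by (simp add: nth_append)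
      moreover have "(replicate k1 False @ True # rev w1) ! k2 = False" using 2 by (simp add: nth_append)
      ultimately show False using e by simp
    qed
  qed
  thus ?case using e by simp
qed

lemma length_blk: "length w \<le> m \<Longrightarrow> length (blk m w) = m + 1"
  by (simp add: blk_def)

lemma concat_blocks_inj:
  assumes "\<forall>b\<in>set xs. length b = k" "\<forall>b\<in>set ys. length b = k" "length xs = length ys"
    "concat xs = concat ys"
  shows "xs = ys"
  using assms(3,1,2,4)
proof (induction xs ys rule: list_induct2)
  case Nil thus ?case by simp
next
  case (Cons x xs y ys)
  have l: "length x = length y" using Cons.prems(1,2) by simp
  have e: "x @ concat xs = y @ concat ys" using Cons.prems(3) by simp
  have xy: "x = y" and c: "concat xs = concat ys"
    using append_eq_append_conv[OF disjI1[OF l]] e by blast+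
  have "xs = ys" using Cons.IH Cons.prems(1,2) c by simp
  thus ?case using xy by simp
qed

lemma mx_ge: "w \<in> set ls \<Longrightarrow> length w \<le> mx ls"
  by (simp add: mx_def)

lemma length_blk': "w \<in> set ls \<Longrightarrow> length (blk (mx ls) w) = Suc (mx ls)"
  using mx_ge[of w ls] by (simp add: blk_def)

lemma Enc_length:
  assumes "\<not> (\<forall>w\<in>set ls. w = [])"
  shows "length (Enc ls) = length ls * (mx ls + 1)"
proof -
  have "length (concat (map (blk (mx ls)) ls)) = sum_list (map (\<lambda>w. length (blk (mx ls) w)) ls)"
    by (simp add: length_concat comp_def)
  also have "\<dots> = sum_list (map (\<lambda>w. mx ls + 1) ls)"
    by (rule arg_cong[where f=sum_list], rule map_cong, auto simp: length_blk mx_ge)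
  finally have "length (concat (map (blk (mx ls)) ls)) = length ls * (mx ls + 1)"
    by (simp add: sum_list_triv)
  moreover have "Enc ls = concat (map (blk (mx ls)) ls)" using assms unfolding Enc_def by presburger
  ultimately show ?thesis by simp
qed

lemma Enc_inj:
  assumes "length xs = length ys" and "Enc xs = Enc ys"
  shows "xs = ys"
proof (cases "\<forall>w\<in>set xs. w = []")
  case True
  show ?thesis
  proof (cases "\<forall>w\<in>set ys. w = []")
    case True
    show ?thesis
      by (rule nth_equalityI) (use True \<open>\<forall>w\<in>set xs. w = []\<close> assms(1) in \<open>auto, metis nth_mem\<close>)
  next
    case False
    hence "length (Enc ys) > 0" using Enc_length[OF False] by (cases ys) auto
    moreover have "Enc xs = []" using True by (simp add: Enc_def)
    ultimately show ?thesis using assms by simp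
  qed
next
  case F1: False
  show ?thesis
  proof (cases "\<forall>w\<in>set ys. w = []")
    case True
    have "length (Enc xs) > 0" using Enc_length[OF F1] F1 by (cases xs) auto
    moreover have "Enc ys = []" using True by (simp add: Enc_def)
    ultimately show ?thesis using assms by simp
  next
    case F2: False
    have ne: "length xs > 0" using F1 by (cases xs) auto
    have "length xs * (mx xs + 1) = length ys * (mx ys + 1)"
      using Enc_length[OF F1] Enc_length[OF F2] assms by metis
    hence m: "mx xs = mx ys" using assms(1) ne by simp
    have "concat (map (blk (mx xs)) xs) = concat (map (blk (mx xs)) ys)"
      using assms(2) F1 F2 m by (simp add: Enc_def)
    moreover have "\<forall>b\<in>set (map (blk (mx xs)) xs). length b = mx xs + 1"
      by (auto simp: length_blk')
    moreover have "\<forall>b\<in>set (map (blk (mx xs)) ys). length b = mx xs + 1"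
      unfolding m by (auto simp: length_blk')
    ultimately have "map (blk (mx xs)) xs = map (blk (mx xs)) ys"
      using concat_blocks_inj[of "map (blk (mx xs)) xs" "mx xs + 1" "map (blk (mx xs)) ys"] assms(1)
      by simp
    moreover have "inj (blk (mx xs))"
      by (rule injI) (simp add: blk_def blk_inj_aux)
    ultimately show ?thesis by (simp add: inj_map_eq_map)
  qed
qed

lemma Enc_bound:
  assumes "\<forall>w\<in>set ls. length w \<le> s"
  shows "length (Enc ls) \<le> 2 * length ls * s"
proof (cases "\<forall>w\<in>set ls. w = []")
  case True thus ?thesis by (simp add: Enc_def)
next
  case False
  then obtain w where w: "w \<in> set ls" "w \<noteq> []" by auto
  have "1 \<le> mx ls" using mx_ge[OF w(1)] w(2) by (cases w) auto
  moreover have "mx ls \<le> s" unfolding mx_def using assms w(1) by (subst Max_le_iff) auto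
  ultimately have "mx ls + 1 \<le> 2 * s" by linarith
  hence "length ls * (mx ls + 1) \<le> length ls * (2 * s)" by (rule mult_le_mono2)
  thus ?thesis using Enc_length[OF False] by (metis mult.assoc mult.commute)
qed



definition dec :: "'q list \<Rightarrow> nat \<Rightarrow> 'q \<Rightarrow> nat" where
  "dec qs n q = the (map_of (zip qs (from_nat n :: nat list)) q)"

definition upd :: "'y stream_alg \<Rightarrow> ('q \<Rightarrow> 'x \<Rightarrow> 'q \<times> 'y) \<Rightarrow> ('q \<Rightarrow> nat) \<Rightarrow> 'x \<Rightarrow> 'q \<Rightarrow> nat" where
  "upd A \<sigma> f x q = st_trans A (f (fst (\<sigma> q x))) (snd (\<sigma> q x))"

definition pstates :: "'q list \<Rightarrow> 'y stream_alg \<Rightarrow> nat set" where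
  "pstates qs A = {to_nat (map f qs) | f. \<forall>q\<in>set qs. f q \<in> st_states A}"

definition prod_alg :: "'q list \<Rightarrow> 'y stream_alg \<Rightarrow> ('q \<Rightarrow> 'x \<Rightarrow> 'q \<times> 'y) \<Rightarrow> ('q \<Rightarrow> nat) \<Rightarrow> 'q \<Rightarrow> 'x stream_alg" where
  "prod_alg qs A \<sigma> f0 q0 = \<lparr>st_states = pstates qs A, st_init = to_nat (map f0 qs),
     st_trans = (\<lambda>n x. to_nat (map (upd A \<sigma> (dec qs n) x) qs)),
     st_acc = {n \<in> pstates qs A. dec qs n q0 \<in> st_acc A},
     st_enc = (\<lambda>n. Enc (map (st_enc A) (from_nat n)))\<rparr>"


lemma prod_sel[simp]:
  "st_states (prod_alg qs A \<sigma> f0 q0) = pstates qs A"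
  "st_init (prod_alg qs A \<sigma> f0 q0) = to_nat (map f0 qs)"
  "st_trans (prod_alg qs A \<sigma> f0 q0) = (\<lambda>n x. to_nat (map (upd A \<sigma> (dec qs n) x) qs))"
  "st_acc (prod_alg qs A \<sigma> f0 q0) = {n \<in> pstates qs A. dec qs n q0 \<in> st_acc A}"
  "st_enc (prod_alg qs A \<sigma> f0 q0) = (\<lambda>n. Enc (map (st_enc A) (from_nat n)))"
  by (simp_all add: prod_alg_def)

lemma pstatesE: "n \<in> pstates qs A \<Longrightarrow> (\<And>f. n = to_nat (map f qs) \<Longrightarrow> \<forall>q\<in>set qs. f q \<in> st_states A \<Longrightarrow> P) \<Longrightarrow> P"
  unfolding pstates_def by blast

lemma pstatesI: "\<forall>q\<in>set qs. f q \<in> st_states A \<Longrightarrow> to_nat (map f qs) \<in> pstates qs A"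
  unfolding pstates_def by blast

lemma dec_to_nat: "q \<in> set qs \<Longrightarrow> dec qs (to_nat (map f qs)) q = f q"
  by (simp add: dec_def map_of_zip_map)

lemma run_alg_snoc: "run_alg A (w @ [x]) = st_trans A (run_alg A w) x"
  by (simp add: run_alg_def)

lemma run_alg_states: "wf_alg A \<Longrightarrow> run_alg A w \<in> st_states A"
  by (induction w rule: rev_induct) (auto simp: run_alg_snoc wf_alg_def, simp add: run_alg_def)

lemma upd_dec: "fst (\<sigma> q x) \<in> set qs \<Longrightarrow> upd A \<sigma> (dec qs (to_nat (map f qs))) x q = upd A \<sigma> f x q"
  by (simp add: upd_def dec_to_nat)

lemma run_prod:
  assumes cl: "\<forall>q\<in>set qs. \<forall>x. fst (\<sigma> q x) \<in> set qs"
  shows "run_alg (prod_alg qs A \<sigma> f0 q0) w = to_nat (map (foldl (upd A \<sigma>) f0 w) qs)"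
proof (induction w rule: rev_induct)
  case Nil thus ?case by (simp add: run_alg_def prod_alg_def)
next
  case (snoc x w)
  show ?case
    unfolding run_alg_snoc snoc
    by (simp add: prod_alg_def upd_dec cl)
qed


fun Ur :: "('q \<Rightarrow> 'x \<Rightarrow> 'q \<times> 'y) \<Rightarrow> ('q \<Rightarrow> 'y list) \<Rightarrow> 'q \<Rightarrow> 'x list \<Rightarrow> 'y list" where
  "Ur \<sigma> u0 q [] = u0 q"
| "Ur \<sigma> u0 q (x # ws) = Ur \<sigma> u0 (fst (\<sigma> q x)) ws @ [snd (\<sigma> q x)]"

definition U where "U \<sigma> u0 q w = Ur \<sigma> u0 q (rev w)"

lemma U_Nil[simp]: "U \<sigma> u0 q [] = u0 q" by (simp add: U_def)
lemma U_snoc[simp]: "U \<sigma> u0 q (w @ [x]) = U \<sigma> u0 (fst (\<sigma> q x)) w @ [snd (\<sigma> q x)]"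
  by (simp add: U_def)

lemma foldl_upd:
  assumes "\<And>q. f0 q = run_alg A (u0 q)"
  shows "foldl (upd A \<sigma>) f0 w q = run_alg A (U \<sigma> u0 q w)"
  by (induction w arbitrary: q rule: rev_induct) (auto simp: assms upd_def run_alg_snoc)

lemma prod_wf:
  assumes cl: "\<forall>q\<in>set qs. \<forall>x. fst (\<sigma> q x) \<in> set qs"
    and wf: "wf_alg A" and f0: "\<forall>q\<in>set qs. f0 q \<in> st_states A"
  shows "wf_alg (prod_alg qs A \<sigma> f0 q0)"
  unfolding wf_alg_def prod_sel
proof (intro conjI)
  show "to_nat (map f0 qs) \<in> pstates qs A"
    using f0 by (rule pstatesI)
  show "\<forall>q\<in>pstates qs A. \<forall>a. to_nat (map (upd A \<sigma> (dec qs q) a) qs) \<in> pstates qs A"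
  proof (intro ballI allI)
    fix n a assume "n \<in> pstates qs A"
    then obtain f where n: "n = to_nat (map f qs)" and f: "\<forall>q\<in>set qs. f q \<in> st_states A"
      by (rule pstatesE)
    have "\<forall>q\<in>set qs. upd A \<sigma> (dec qs n) a q \<in> st_states A"
      using cl f wf unfolding n by (auto simp: upd_def dec_to_nat wf_alg_def)
    thus "to_nat (map (upd A \<sigma> (dec qs n) a) qs) \<in> pstates qs A"
      by (rule pstatesI)
  qed
  show "{n \<in> pstates qs A. dec qs n q0 \<in> st_acc A} \<subseteq> pstates qs A"
    by blast
  show "inj_on (\<lambda>n. Enc (map (st_enc A) (from_nat n))) (pstates qs A)"
  proof (rule inj_onI)
    fix n m assume "n \<in> pstates qs A" "m \<in> pstates qs A"
      and e: "Enc (map (st_enc A) (from_nat n)) = Enc (map (st_enc A) (from_nat m))"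
    obtain f where n: "n = to_nat (map f qs)" and f: "\<forall>q\<in>set qs. f q \<in> st_states A"
      using \<open>n \<in> pstates qs A\<close> by (rule pstatesE)
    obtain g where m: "m = to_nat (map g qs)" and g: "\<forall>q\<in>set qs. g q \<in> st_states A"
      using \<open>m \<in> pstates qs A\<close> by (rule pstatesE)
    have "Enc (map (st_enc A \<circ> f) qs) = Enc (map (st_enc A \<circ> g) qs)"
      using e by (simp add: n m)
    hence "map (st_enc A \<circ> f) qs = map (st_enc A \<circ> g) qs" by (rule Enc_inj[rotated]) simp
    hence "\<forall>q\<in>set qs. st_enc A (f q) = st_enc A (g q)" by (simp add: map_eq_conv)
    hence "\<forall>q\<in>set qs. f q = g q" using f g wf unfolding wf_alg_def inj_on_def by blast
    hence "map f qs = map g qs" by simp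
    thus "n = m" by (simp add: n m)
  qed
qed

lemma prod_accepts:
  assumes cl: "\<forall>q\<in>set qs. \<forall>x. fst (\<sigma> q x) \<in> set qs"
    and wf: "wf_alg A" and f0: "\<forall>q. f0 q = run_alg A (u0 q)" and q0: "q0 \<in> set qs"
  shows "accepts_alg (prod_alg qs A \<sigma> f0 q0) w \<longleftrightarrow> accepts_alg A (U \<sigma> u0 q0 w)"
proof -
  have "run_alg (prod_alg qs A \<sigma> f0 q0) w \<in> pstates qs A"
    using run_alg_states[OF wf] by (auto simp: run_prod[OF cl] pstates_def foldl_upd f0)
  thus ?thesis
    unfolding accepts_alg_def run_prod[OF cl]
    by (simp add: prod_alg_def dec_to_nat q0 foldl_upd f0)
qed

lemma prod_enc_bound:
  assumes "n \<in> st_states (prod_alg qs A \<sigma> f0 q0)"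
    and "\<forall>q\<in>st_states A. length (st_enc A q) \<le> s"
  shows "length (st_enc (prod_alg qs A \<sigma> f0 q0) n) \<le> 2 * length qs * s"
proof -
  obtain f where n: "n = to_nat (map f qs)" and f: "\<forall>q\<in>set qs. f q \<in> st_states A"
    using assms(1) by (auto simp: prod_alg_def pstates_def)
  show ?thesis using Enc_bound[of "map (st_enc A \<circ> f) qs" s] f assms(2)
    by (simp add: prod_alg_def n)
qed

lemma prod_enc_run:
  assumes cl: "\<forall>q\<in>set qs. \<forall>x. fst (\<sigma> q x) \<in> set qs"
    and f0: "\<forall>q. f0 q = run_alg A (u0 q)"
    and "\<forall>q\<in>set qs. length (st_enc A (run_alg A (U \<sigma> u0 q w))) \<le> s"
  shows "length (st_enc (prod_alg qs A \<sigma> f0 q0) (run_alg (prod_alg qs A \<sigma> f0 q0) w)) \<le> 2 * length qs * s"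
  using Enc_bound[of "map (\<lambda>q. st_enc A (run_alg A (U \<sigma> u0 q w))) qs" s] assms
  unfolding run_prod[OF cl]
  by (simp add: prod_alg_def foldl_upd comp_def)


lemma length_tau[simp]: "length (mealy_tau M q xs) = length xs"
  by (induction xs arbitrary: q) auto

lemma tau_take: "mealy_tau M q (take j xs) = take j (mealy_tau M q xs)"
  by (induction xs arbitrary: q j) (auto simp: take_Cons split: nat.splits)

lemma tau_drop: "drop k (rev (mealy_tau M q (rev z))) = rev (mealy_tau M q (rev (drop k z)))"
  by (simp add: drop_rev rev_drop tau_take)

lemma last_n_transd:
  "length z \<ge> n \<Longrightarrow> last_n p n (rev (mealy_tau M q (rev z))) = rev (mealy_tau M q (rev (last_n p' n z)))"
  by (simp add: last_n_def tau_drop)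

lemma last_n_pad: "last_n p n (replicate n p @ w) = last_n p n w"
  by (auto simp: last_n_def)

lemma U_fixed:
  "U (m_delta M) (\<lambda>q. rev (mealy_tau M q (rev (replicate n pad)))) q w
   = rev (mealy_tau M q (rev (replicate n pad @ w)))"
  by (induction w arbitrary: q rule: rev_induct) (auto split: prod.splits)

definition sigV :: "('q, 'a, 'b) mealy \<Rightarrow> 'q \<Rightarrow> 'a option \<Rightarrow> 'q \<times> 'b option" where
  "sigV M p x = (case x of Some a \<Rightarrow> (fst (m_delta M p a), Some (snd (m_delta M p a))) | None \<Rightarrow> (p, None))"

lemma wnd_snoc: "wnd (w @ [x]) = wnd_step (wnd w) x"
  by (simp add: wnd_def)

lemma wnd_U:
  "wnd (U (sigV M) (\<lambda>q. []) q w) = rev (mealy_tau M q (rev (wnd w)))"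
proof (induction w arbitrary: q rule: rev_induct)
  case Nil thus ?case by (simp add: wnd_def)
next
  case (snoc x w)
  show ?case
  proof (cases x)
    case None
    have "tl (rev (mealy_tau M q (rev (wnd w)))) = drop 1 (rev (mealy_tau M q (rev (wnd w))))"
      by (simp add: drop_Suc)
    also have "\<dots> = rev (mealy_tau M q (rev (tl (wnd w))))" by (simp add: tau_drop drop_Suc)
    finally show ?thesis using snoc None by (simp add: wnd_snoc sigV_def)
  next
    case (Some a)
    thus ?thesis using snoc by (simp add: wnd_snoc sigV_def split: prod.splits)
  qed
qed

lemma prefix_U:
  "prefix v (U \<sigma> (\<lambda>q. []) q w) \<Longrightarrow> \<exists>w' q'. prefix w' w \<and> v = U \<sigma> (\<lambda>q. []) q' w'"
proof (induction w arbitrary: q v rule: rev_induct)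
  case Nil
  hence "prefix [] []" "v = U \<sigma> (\<lambda>q. []) q []" by simp_all
  thus ?case by blast
next
  case (snoc x w)
  from snoc.prems have "v = U \<sigma> (\<lambda>q. []) q (w @ [x]) \<or> prefix v (U \<sigma> (\<lambda>q. []) (fst (\<sigma> q x)) w)"
    by (simp add: prefix_snoc)
  thus ?case
  proof
    assume "v = U \<sigma> (\<lambda>q. []) q (w @ [x])"
    moreover have "prefix (w @ [x]) (w @ [x])" by simp
    ultimately show ?thesis by blast
  next
    assume "prefix v (U \<sigma> (\<lambda>q. []) (fst (\<sigma> q x)) w)"
    then obtain w' q' where "prefix w' w" "v = U \<sigma> (\<lambda>q. []) q' w'" using snoc.IH by blast
    hence "prefix w' (w @ [x])" "v = U \<sigma> (\<lambda>q. []) q' w'" by simp_all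
    thus ?thesis by blast
  qed
qed

lemma bigO_transfer:
  assumes "bigO_enat f s" and "\<forall>n. g n \<le> enat c * f n"
  shows "bigO_enat g s"
proof -
  obtain c0 N where h: "\<forall>n\<ge>N. \<exists>k. f n = enat k \<and> real k \<le> c0 * s n"
    using assms(1) unfolding bigO_enat_def by blast
  have "\<forall>n\<ge>N. \<exists>k. g n = enat k \<and> real k \<le> (real c * c0) * s n"
  proof (intro allI impI)
    fix n assume "n \<ge> N"
    then obtain k where k: "f n = enat k" "real k \<le> c0 * s n" using h by blast
    have "g n \<le> enat (c * k)" using assms(2) k by (metis times_enat_simps(1))
    then obtain k' where k': "g n = enat k'" "k' \<le> c * k"
      by (metis enat_ile enat_ord_simps(1))
    have "real k' \<le> real c * real k" using k'(2) by (metis of_nat_le_iff of_nat_mult)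
    also have "\<dots> \<le> real c * (c0 * s n)" using k(2) by (simp add: mult_left_mono)
    finally show "\<exists>k. g n = enat k \<and> real k \<le> (real c * c0) * s n" using k'(1) by (simp add: mult.assoc)
  qed
  thus ?thesis unfolding bigO_enat_def by blast
qed

lemma Inf_attained:
  fixes F :: "'x \<Rightarrow> enat"
  assumes "S \<noteq> {}"
  shows "\<exists>A\<in>S. F A = (INF A\<in>S. F A)"
proof -
  have "(INF A\<in>S. F A) = (LEAST x. x \<in> F ` S)" using assms by (simp add: Inf_enat_def)
  moreover have "(LEAST x. x \<in> F ` S) \<in> F ` S" using assms by (auto intro: LeastI)
  ultimately show ?thesis by auto
qed

lemma enat_mult_bound:
  fixes X :: "'x set" and F :: "'x \<Rightarrow> nat"
  assumes "d > 0" and "\<And>s. B = enat s \<Longrightarrow> \<forall>x\<in>X. F x \<le> d * s"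
  shows "(SUP x\<in>X. enat (F x)) \<le> enat d * B"
proof (cases B)
  case (enat s)
  have "(SUP x\<in>X. enat (F x)) \<le> enat (d * s)"
    by (rule SUP_least) (use assms(2)[OF enat] in auto)
  thus ?thesis using enat by simp
next
  case infinity
  thus ?thesis using assms(1) by (simp add: imult_is_infinity)
qed



theorem lemma3p3:
  fixes M :: "('q, 'a::finite, 'b::finite) mealy"
    and K :: "'a list set" and L :: "'b list set" and d :: nat
  assumes "wf_mealy M" and "card (m_states M) = d"
    and "is_left_reduction M K L"
  shows "(\<forall>padK padL n. F_space padK K n \<le> enat (2 * d) * F_space padL L n)
       \<and> (\<forall>n. V_space K n \<le> enat (2 * d) * V_space L n)
       \<and> (\<forall>s padK padL. L \<in> F_class padL s \<longrightarrow> K \<in> F_class padK s)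
       \<and> (\<forall>s. L \<in> V_class s \<longrightarrow> K \<in> V_class s)"
proof -
  have fin: "finite (m_states M)" and q0: "m_init M \<in> m_states M"
    and clM: "\<forall>q\<in>m_states M. \<forall>a. fst (m_delta M q a) \<in> m_states M"
    using assms(1) by (auto simp: wf_mealy_def)
  obtain qs where qs: "set qs = m_states M" "distinct qs"
    using finite_distinct_list[OF fin] by blast
  have lqs: "length qs = d" using qs assms(2) distinct_card by fastforce
  have dpos: "2 * d > 0" using q0 fin assms(2) card_gt_0_iff by fastforce
  have q0s: "m_init M \<in> set qs" using qs q0 by simp
  have clF: "\<forall>q\<in>set qs. \<forall>x. fst (m_delta M q x) \<in> set qs" using clM qs by simp
  have clV: "\<forall>q\<in>set qs. \<forall>x. fst (sigV M q x) \<in> set qs"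
    using clM qs by (auto simp: sigV_def split: option.splits)
  have red: "\<And>x. x \<in> K \<longleftrightarrow> rev (mealy_tau M (m_init M) (rev x)) \<in> L"
    using assms(3) by (simp add: is_left_reduction_def left_transduction_def)

  define u0F where "u0F = (\<lambda>(padK::'a) (n::nat) q. rev (mealy_tau M q (rev (replicate n padK))))"
  define KF where "KF = (\<lambda>(A :: 'b stream_alg) n padK.
      prod_alg qs A (m_delta M) (\<lambda>q. run_alg A (u0F padK n q)) (m_init M))"
  define KV where "KV = (\<lambda>(A :: 'b option stream_alg). prod_alg qs A (sigV M) (\<lambda>q. st_init A) (m_init M))"

  have KF_ok: "is_fixed_alg padK K n (KF A n padK) \<and> alg_space (KF A n padK) \<le> enat (2 * d) * alg_space A"
    if A: "is_fixed_alg padL L n A" for A n padK padL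
  proof
    have wf: "wf_alg A" using A by (simp add: is_fixed_alg_def)
    have wfK: "wf_alg (KF A n padK)" unfolding KF_def
      by (rule prod_wf[OF clF wf]) (simp add: run_alg_states[OF wf])
    have "accepts_alg (KF A n padK) w \<longleftrightarrow> last_n padK n w \<in> K" for w
    proof -
      have "accepts_alg (KF A n padK) w \<longleftrightarrow> accepts_alg A (U (m_delta M) (u0F padK n) (m_init M) w)"
        unfolding KF_def by (rule prod_accepts[OF clF wf _ q0s]) simp
      also have "\<dots> \<longleftrightarrow> last_n padL n (rev (mealy_tau M (m_init M) (rev (replicate n padK @ w)))) \<in> L"
        using A unfolding u0F_def U_fixed by (simp add: is_fixed_alg_def)
      also have "\<dots> \<longleftrightarrow> rev (mealy_tau M (m_init M) (rev (last_n padK n (replicate n padK @ w)))) \<in> L"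
        by (subst last_n_transd[where p'=padK]) auto
      also have "\<dots> \<longleftrightarrow> last_n padK n w \<in> K" by (simp add: last_n_pad red)
      finally show ?thesis .
    qed
    thus "is_fixed_alg padK K n (KF A n padK)" using wfK by (simp add: is_fixed_alg_def)
    show "alg_space (KF A n padK) \<le> enat (2 * d) * alg_space A"
      unfolding alg_space_def
    proof (rule enat_mult_bound[OF dpos])
      fix s assume s: "(SUP q\<in>st_states A. enat (length (st_enc A q))) = enat s"
      have "\<forall>q\<in>st_states A. length (st_enc A q) \<le> s"
      proof
        fix q assume "q \<in> st_states A"
        hence "enat (length (st_enc A q)) \<le> enat s" unfolding s[symmetric] by (rule SUP_upper)
        thus "length (st_enc A q) \<le> s" by simp
      qed
      thus "\<forall>x\<in>st_states (KF A n padK). length (st_enc (KF A n padK) x) \<le> 2 * d * s"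
        unfolding KF_def using prod_enc_bound lqs by metis
    qed
  qed

  have F1: "F_space padK K n \<le> enat (2 * d) * F_space padL L n" for padK padL n
  proof (cases "{A. is_fixed_alg padL L n A} = {}")
    case True
    thus ?thesis using dpos by (simp add: F_space_def imult_is_infinity top_enat_def)
  next
    case False
    then obtain A where A: "is_fixed_alg padL L n A" and eq: "alg_space A = F_space padL L n"
      using Inf_attained[OF False, of alg_space] unfolding F_space_def by auto
    have "F_space padK K n \<le> alg_space (KF A n padK)"
      unfolding F_space_def using KF_ok[OF A] by (auto intro: INF_lower)
    also have "\<dots> \<le> enat (2 * d) * F_space padL L n" using KF_ok[OF A] eq by simp
    finally show ?thesis .
  qed

  have KV_ok: "is_var_alg K (KV A) \<and> (\<forall>n. var_space (KV A) n \<le> enat (2 * d) * var_space A n)"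
    if A: "is_var_alg L A" for A
  proof
    have wf: "wf_alg A" using A by (simp add: is_var_alg_def)
    have f0: "\<forall>q. st_init A = run_alg A ((\<lambda>q. []) q)" by (simp add: run_alg_def)
    have wfK: "wf_alg (KV A)" unfolding KV_def
      by (rule prod_wf[OF clV wf]) (use wf in \<open>simp only: wf_alg_def, blast\<close>)
    have "accepts_alg (KV A) w \<longleftrightarrow> wnd w \<in> K" for w
    proof -
      have "accepts_alg (KV A) w \<longleftrightarrow> accepts_alg A (U (sigV M) (\<lambda>q. []) (m_init M) w)"
        unfolding KV_def by (rule prod_accepts[OF clV wf f0 q0s])
      also have "\<dots> \<longleftrightarrow> wnd w \<in> K"
        using A unfolding is_var_alg_def red[of "wnd w"] by (simp only: wnd_U)
      finally show ?thesis .
    qed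
    thus "is_var_alg K (KV A)" using wfK by (simp add: is_var_alg_def)
    show "\<forall>n. var_space (KV A) n \<le> enat (2 * d) * var_space A n"
    proof
      fix n
      show "var_space (KV A) n \<le> enat (2 * d) * var_space A n"
      proof (cases "var_space A n")
        case infinity
        thus ?thesis using dpos by (simp add: imult_is_infinity)
      next
        case (enat s)
        have bnd: "length (st_enc A (run_alg A (U (sigV M) (\<lambda>q. []) q u'))) \<le> s"
          if "prefix u' u" "\<forall>v. prefix v u \<longrightarrow> length (wnd v) \<le> n" for u u' q
        proof -
          have "\<forall>v. prefix v (U (sigV M) (\<lambda>q. []) q u') \<longrightarrow> length (wnd v) \<le> n"
          proof (intro allI impI)
            fix v assume "prefix v (U (sigV M) (\<lambda>q. []) q u')"
            from prefix_U[OF this] obtain w' q' where "prefix w' u'" "v = U (sigV M) (\<lambda>q. []) q' w'"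
              by blast
            moreover have "length (wnd w') \<le> n"
              using that(2) prefix_order.trans[OF \<open>prefix w' u'\<close> that(1)] by blast
            ultimately show "length (wnd v) \<le> n" by (simp add: wnd_U)
          qed
          hence "enat (length (st_enc A (run_alg A (U (sigV M) (\<lambda>q. []) q u')))) \<in>
              {enat (length (st_enc A (run_alg A u'))) | u u'. prefix u' u \<and> (\<forall>v. prefix v u \<longrightarrow> length (wnd v) \<le> n)}"
            by (intro CollectI exI[of _ "U (sigV M) (\<lambda>q. []) q u'"] conjI refl prefix_order.refl)
          hence "enat (length (st_enc A (run_alg A (U (sigV M) (\<lambda>q. []) q u')))) \<le> var_space A n"
            unfolding var_space_def by (rule Sup_upper)
          thus ?thesis using enat by simp
        qed
        have "var_space (KV A) n \<le> enat (2 * d * s)"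
          unfolding var_space_def
        proof (rule Sup_least)
          fix x assume "x \<in> {enat (length (st_enc (KV A) (run_alg (KV A) u'))) | u u'.
                 prefix u' u \<and> (\<forall>v. prefix v u \<longrightarrow> length (wnd v) \<le> n)}"
          then obtain u u' where x: "x = enat (length (st_enc (KV A) (run_alg (KV A) u')))"
            and h: "prefix u' u" "\<forall>v. prefix v u \<longrightarrow> length (wnd v) \<le> n" by blast
          have "length (st_enc (KV A) (run_alg (KV A) u')) \<le> 2 * length qs * s"
            unfolding KV_def by (rule prod_enc_run[OF clV f0]) (use bnd[OF h] in blast)
          thus "x \<le> enat (2 * d * s)" using x lqs by simp
        qed
        thus ?thesis using enat by simp
      qed
    qed
  qed

  have V1: "V_space K n \<le> enat (2 * d) * V_space L n" for n
  proof (cases "{A. is_var_alg L A} = {}")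
    case True
    thus ?thesis using dpos by (simp add: V_space_def imult_is_infinity top_enat_def)
  next
    case False
    then obtain A where A: "is_var_alg L A" and eq: "var_space A n = V_space L n"
      using Inf_attained[OF False, of "\<lambda>A. var_space A n"] unfolding V_space_def by auto
    have "V_space K n \<le> var_space (KV A) n"
      unfolding V_space_def using KV_ok[OF A] by (auto intro: INF_lower)
    also have "\<dots> \<le> enat (2 * d) * var_space A n" using KV_ok[OF A] by blast
    also have "\<dots> = enat (2 * d) * V_space L n" using eq by simp
    finally show ?thesis .
  qed

  have FC: "L \<in> F_class padL s \<longrightarrow> K \<in> F_class padK s" for s padK padL
  proof
    assume "L \<in> F_class padL s"
    then obtain A where A: "\<forall>n. is_fixed_alg padL L n (A n)" and b: "bigO_enat (\<lambda>n. alg_space (A n)) s"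
      unfolding F_class_def by blast
    have "\<forall>n. is_fixed_alg padK K n (KF (A n) n padK)" using KF_ok A by blast
    moreover have "bigO_enat (\<lambda>n. alg_space (KF (A n) n padK)) s"
      by (rule bigO_transfer[OF b]) (use KF_ok A in blast)
    ultimately have "(\<forall>n. is_fixed_alg padK K n (KF (A n) n padK)) \<and> bigO_enat (\<lambda>n. alg_space (KF (A n) n padK)) s"
      by (rule conjI)
    hence "\<exists>B. (\<forall>n. is_fixed_alg padK K n (B n)) \<and> bigO_enat (\<lambda>n. alg_space (B n)) s"
      by (rule exI[where x="\<lambda>n. KF (A n) n padK"])
    thus "K \<in> F_class padK s" unfolding F_class_def by (rule CollectI)
  qed

  have VC: "L \<in> V_class s \<longrightarrow> K \<in> V_class s" for s
  proof
    assume "L \<in> V_class s"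
    then obtain A where A: "is_var_alg L A" and b: "bigO_enat (var_space A) s"
      unfolding V_class_def by blast
    have "bigO_enat (var_space (KV A)) s"
      by (rule bigO_transfer[OF b]) (use KV_ok[OF A] in blast)
    hence "is_var_alg K (KV A) \<and> bigO_enat (var_space (KV A)) s" using KV_ok[OF A] by blast
    hence "\<exists>B. is_var_alg K B \<and> bigO_enat (var_space B) s" by (rule exI[where x="KV A"])
    thus "K \<in> V_class s" unfolding V_class_def by (rule CollectI)
  qed

  show ?thesis using F1 V1 FC VC by blast
qed
end
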